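(* Let $p=a/b$ with $a,b$ positive coprime integers, $0<p<1/2$, and $b\not\equiv 0\pmod 4$; set $k'=b$ if $b$ is even and $k'=2b$ if $b$ is odd (so $k'p=a$ for $b$ even and $k'p=2a$ for $b$ odd). Let $(\Delta_L^{(m)})_{m\ge 1}$ satisfy $\Delta_L^{(m+1)}=\Delta_L^{(m)}+1+2p-2\lceil\Delta_L^{(m)}\rceil$ for all $m\ge1$, with initial value $-1<\Delta_L^{(1)}<1$. Then $$|\Delta_L^{(m)}|<k'p+2\quad\text{for all } m\ge 1 .$$
   Context: $\lceil\cdot\rceil$ denotes the ceiling function. *)

theory Defs
  imports Complex_Main
begin

end

theory Submission
  imports Defs
begin

lemma A_period:
  fixes h :: "nat \<Rightarrow> int" and M0 :: nat
  assumes per: "\<And>i. h (i + M0) = h i" and odd: "odd M0"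
  shows "(\<Sum>i<n+M0. (-1)^i * h i) = (\<Sum>i<M0. (-1)^i * h i) - (\<Sum>i<n. (-1)^i * h i)"
proof (induction n)
  case 0 then show ?case by simp
next
  case (Suc n)
  have "(-1::int)^(n+M0) = - ((-1)^n)" using odd by (simp add: power_add)
  then show ?case using Suc per[of n] by (simp add: algebra_simps)
qed

lemma sub_bound:
  fixes h :: "nat \<Rightarrow> int"
  assumes "\<And>i. h i \<ge> 0" "I \<subseteq> J" "finite J"
  shows "\<bar>\<Sum>i\<in>I. (-1)^i * h i\<bar> \<le> (\<Sum>i\<in>J. h i)"
proof -
  have "\<bar>\<Sum>i\<in>I. (-1)^i * h i\<bar> \<le> (\<Sum>i\<in>I. \<bar>(-1)^i * h i\<bar>)" by (rule sum_abs)
  also have "\<dots> = (\<Sum>i\<in>I. h i)" using assms(1) by (simp add: abs_mult)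
  also have "\<dots> \<le> (\<Sum>i\<in>J. h i)" using assms by (intro sum_mono2) auto
  finally show ?thesis .
qed

lemma A_bound:
  fixes h :: "nat \<Rightarrow> int" and M0 :: nat
  assumes nn: "\<And>i. h i \<ge> 0" and per: "\<And>i. h (i + M0) = h i" and odd: "odd M0"
    and K: "(\<Sum>i<M0. h i) = K"
  shows "\<bar>\<Sum>i<n. (-1)^i * h i\<bar> \<le> K"
proof (induction n rule: less_induct)
  case (less n)
  show ?case
  proof (cases "n \<le> M0")
    case True
    then show ?thesis using sub_bound[of h, OF nn, of "{..<n}" "{..<M0}"] K by auto
  next
    case False
    then obtain n' where n': "n = n' + M0" by (metis add.commute le_add_diff_inverse nat_le_linear)
    show ?thesis
    proof (cases "n' \<le> M0")
      case True
      have "(\<Sum>i<M0. (-1)^i * h i) = (\<Sum>i<n'. (-1)^i * h i) + (\<Sum>i\<in>{n'..<M0}. (-1)^i * h i)"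
        using True by (metis sum.atLeastLessThan_concat lessThan_atLeast0 zero_le)
      then have "(\<Sum>i<n. (-1)^i * h i) = (\<Sum>i\<in>{n'..<M0}. (-1)^i * h i)"
        using A_period[of h M0,OF per odd, of n'] n' by simp
      moreover have "\<bar>\<Sum>i\<in>{n'..<M0}. (-1)^i * h i\<bar> \<le> (\<Sum>i<M0. h i)"
        by (rule sub_bound[of h, OF nn]) auto
      ultimately show ?thesis using K by simp
    next
      case False
      then obtain n'' where n'': "n' = n'' + M0" by (metis add.commute le_add_diff_inverse nat_le_linear)
      have "(\<Sum>i<n. (-1)^i * h i) = (\<Sum>i<n''. (-1)^i * h i)"
        using A_period[of h M0,OF per odd, of n'] A_period[of h M0,OF per odd, of n''] n' n'' by simp
      moreover have "n'' < n" using n' n'' odd by (cases M0) auto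
      ultimately show ?thesis using less by auto
    qed
  qed
qed

theorem lemma4:
  fixes a b :: nat and D :: "nat \<Rightarrow> real"
  assumes "a > 0" and "b > 0" and "coprime a b"
    and "real a / real b < 1/2"
    and "\<not> (4 dvd b)"
    and "\<And>m. m \<ge> 1 \<Longrightarrow>
           D (m + 1) = D m + 1 + 2 * (real a / real b) - 2 * of_int \<lceil>D m\<rceil>"
    and "-1 < D 1" and "D 1 < 1"
  shows "\<forall>m\<ge>1. \<bar>D m\<bar> <
           real (if even b then b else 2 * b) * (real a / real b) + 2"
proof -
  define p where "p = real a / real b"
  define K0 :: nat where "K0 = (if even b then a else 2 * a)"
  define M0 :: nat where "M0 = (if even b then b div 2 else b)"
  have p0: "0 \<le> p" and p1: "2 * p < 1" using assms(4) by (auto simp: p_def mult.commute)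
  have oddM0: "odd M0"
  proof (cases "even b")
    case True
    then obtain c where c: "b = 2 * c" by blast
    have "odd c" using assms(5) c by (auto simp: elim!: evenE)
    then show ?thesis using c True by (simp add: M0_def)
  qed (simp add: M0_def)
  have MK: "2 * real M0 * p = real K0"
  proof (cases "even b")
    case True
    then obtain c where c: "b = 2 * c" by blast
    then show ?thesis using True assms(2) by (simp add: M0_def K0_def p_def)
  next
    case False then show ?thesis using assms(2) by (simp add: M0_def K0_def p_def)
  qed
  have goalK: "real (if even b then b else 2 * b) * (real a / real b) = real K0"
    using assms(2) by (simp add: K0_def)
  define E where "E n = D (n + 1)" for n
  have rec: "E (Suc n) = E n + 1 + 2 * p - 2 * of_int \<lceil>E n\<rceil>" for n
    using assms(6)[of "n+1"] by (simp add: E_def p_def)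
  define y where "y n = E 0 + 2 * real n * p" for n
  define f where "f n = of_int \<lceil>y n\<rceil> - y n" for n
  define h where "h n = \<lceil>y (Suc n)\<rceil> - \<lceil>y n\<rceil>" for n
  define C where "C = \<lceil>E 0\<rceil>"
  define c where "c n = (if even n then C - (\<Sum>i<n. (-1)^i * h i) else 1 - C + (\<Sum>i<n. (-1)^i * h i))" for n
  have f01: "0 \<le> f n \<and> f n < 1" for n
    unfolding f_def using le_of_int_ceiling[of "y n"] ceiling_correct[of "y n"] by linarith
  have ysuc: "y (Suc n) = y n + 2 * p" for n by (simp add: y_def algebra_simps)
  have hnn: "h i \<ge> 0" for i
    unfolding h_def using ysuc[of i] p0 by (simp add: ceiling_mono)
  have yper: "y (i + M0) = y i + of_int (int K0)" for i
    using MK by (simp add: y_def algebra_simps)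
  have ce: "\<lceil>x + real K0\<rceil> = \<lceil>x\<rceil> + int K0" for x :: real
    by (metis ceiling_add_of_int of_int_of_nat_eq)
  have yper0: "y M0 = y 0 + real K0" using yper[of 0] by simp
  have hper: "h (i + M0) = h i" for i
  proof -
    have "y (Suc (i + M0)) = y (Suc i) + of_int (int K0)" using yper[of "Suc i"] by simp
    then show ?thesis unfolding h_def using yper[of i] ce by simp
  qed
  have hsum: "(\<Sum>i<M0. h i) = int K0"
  proof -
    have "(\<Sum>i<M0. h i) = \<lceil>y M0\<rceil> - \<lceil>y 0\<rceil>" unfolding h_def by (rule sum_lessThan_telescope)
    also have "\<dots> = int K0" using yper0 ce by simp
    finally show ?thesis .
  qed
  have Abound: "\<bar>\<Sum>i<n. (-1)^i * h i\<bar> \<le> int K0" for n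
    by (rule A_bound[OF hnn hper oddM0 hsum])
  have csuc: "c (Suc n) = 1 - c n + h n" for n
    by (cases "even n") (auto simp: c_def)
  have fsuc: "f (Suc n) = f n + of_int (h n) - 2 * p" for n
    unfolding f_def h_def using ysuc[of n] by simp
  have Ec: "E n = of_int (c n) - f n" for n
  proof (induction n)
    case 0
    have "y 0 = E 0" by (simp add: y_def)
    then show ?case by (simp add: c_def f_def C_def)
  next
    case (Suc n)
    have "\<lceil>E n\<rceil> = c n"
      using Suc f01[of n] by (intro ceiling_unique) auto
    then show ?case using rec[of n] Suc csuc[of n] fsuc[of n] by simp
  qed
  have C01: "C = 0 \<or> C = 1"
  proof -
    have "E 0 \<le> of_int C" "of_int C < E 0 + 1"
      unfolding C_def using le_of_int_ceiling[of "E 0"] ceiling_correct[of "E 0"] by linarith+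
    moreover have "-1 < E 0" "E 0 < 1" using assms(7,8) by (simp_all add: E_def)
    ultimately have "real_of_int C > -1" "real_of_int C < 2" by linarith+
    then have "C > -1" "C < 2" by linarith+
    then show ?thesis by linarith
  qed
  have cb: "- int K0 - 1 \<le> c n \<and> c n \<le> int K0 + 1" for n
    using Abound[of n] C01 by (cases "even n") (auto simp: c_def)
  show ?thesis
  proof (intro allI impI)
    fix m :: nat assume "m \<ge> 1"
    then obtain n where n: "m = n + 1" by (metis add.commute le_add_diff_inverse)
    have "D m = of_int (c n) - f n" using Ec[of n] n by (simp add: E_def)
    moreover have "real_of_int (c n) \<le> real K0 + 1" "real_of_int (c n) \<ge> - real K0 - 1"
      using cb[of n] by linarith+
    ultimately have "\<bar>D m\<bar> < real K0 + 2" using f01[of n] by linarith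
    then show "\<bar>D m\<bar> < real (if even b then b else 2 * b) * (real a / real b) + 2"
      using goalK by simp
  qed
qed

end
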